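(* (i) The infinite fixed point beginning with $a$ of the morphism $a\to aba$, $b\to d$, $c\to b$, $d\to c$ is $2$-automatic. (ii) The infinite fixed point beginning with $a$ of the morphism $a\to aba$, $b\to c$, $c\to b$ is $2$-automatic; more precisely, cutting it into consecutive non-overlapping blocks of length $2$, only the blocks $ab$ and $ac$ occur, and coding $ab=0$, $ac=1$ the resulting sequence is the fixed point of $0\to 01$, $1\to 00$.
   Context: For an integer $q\ge 2$, a sequence is $q$-automatic if it is the image under a letter-to-letter map of a fixed point of a morphism all of whose letter-images have length $q$. *)

theory Defs
  imports Main
begin

text \<open>The image of x under sigma is the (possibly finite) concatenation of sigma (x 0), sigma (x 1), ...
  x is a fixed point of sigma iff that image is infinite and equals x, i.e. every finite
  prefix sigma(x 0 ... x (m-1)) is a prefix of x and these prefixes have unbounded length.\<close>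

definition morph_prefix :: "('a \<Rightarrow> 'a list) \<Rightarrow> (nat \<Rightarrow> 'a) \<Rightarrow> nat \<Rightarrow> 'a list" where
  "morph_prefix \<sigma> x m = concat (map \<sigma> (map x [0..<m]))"

definition is_fixed_point :: "('a \<Rightarrow> 'a list) \<Rightarrow> (nat \<Rightarrow> 'a) \<Rightarrow> bool" where
  "is_fixed_point \<sigma> x \<longleftrightarrow>
     (\<forall>n. \<exists>m. n \<le> length (morph_prefix \<sigma> x m)) \<and>
     (\<forall>m. \<forall>i < length (morph_prefix \<sigma> x m). morph_prefix \<sigma> x m ! i = x i)"

text \<open>q-automatic: image under a letter-to-letter map of a fixed point of a q-uniform morphism
  over a finite alphabet (letters coded as natural numbers in a finite set A).\<close>

definition q_automatic :: "nat \<Rightarrow> (nat \<Rightarrow> 'b) \<Rightarrow> bool" where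
  "q_automatic q u \<longleftrightarrow> 2 \<le> q \<and>
     (\<exists>(A::nat set) \<tau> y (\<phi>::nat \<Rightarrow> 'b).
        finite A \<and> (\<forall>c\<in>A. length (\<tau> c) = q \<and> set (\<tau> c) \<subseteq> A) \<and>
        (\<forall>n. y n \<in> A) \<and> is_fixed_point \<tau> y \<and> (\<forall>n. u n = \<phi> (y n)))"

datatype letter4 = La | Lb | Lc | Ld
datatype letter3 = Ma | Mb | Mc

fun sigma4 :: "letter4 \<Rightarrow> letter4 list" where
  "sigma4 La = [La, Lb, La]"
| "sigma4 Lb = [Ld]"
| "sigma4 Lc = [Lb]"
| "sigma4 Ld = [Lc]"

fun sigma3 :: "letter3 \<Rightarrow> letter3 list" where
  "sigma3 Ma = [Ma, Mb, Ma]"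
| "sigma3 Mb = [Mc]"
| "sigma3 Mc = [Mb]"

definition tau01 :: "nat \<Rightarrow> nat list" where
  "tau01 c = (if c = 0 then [0, 1] else [0, 0])"

end

theory Submission
  imports Defs
begin

lemma mp_0[simp]: "morph_prefix \<sigma> x 0 = []"
  by (simp add: morph_prefix_def)

lemma mp_Suc: "morph_prefix \<sigma> x (Suc m) = morph_prefix \<sigma> x m @ \<sigma> (x m)"
  by (simp add: morph_prefix_def)

lemma mp_len:
  assumes ne: "\<forall>c. \<sigma> c \<noteq> []"
  shows "k + length (\<sigma> (x 0)) \<le> length (morph_prefix \<sigma> x (Suc k))"
proof (induction k)
  case 0 then show ?case by (simp add: mp_Suc)
next
  case (Suc k)
  have "\<sigma> (x (Suc k)) \<noteq> []" using ne by blast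
  then have "length (\<sigma> (x (Suc k))) \<ge> 1" by (cases "\<sigma> (x (Suc k))") auto
  then show ?case using Suc by (simp add: mp_Suc[of \<sigma> x "Suc k"])
qed

lemma mp_cong: "(\<And>i. i < m \<Longrightarrow> x i = z i) \<Longrightarrow> morph_prefix \<sigma> x m = morph_prefix \<sigma> z m"
proof -
  assume h: "\<And>i. i < m \<Longrightarrow> x i = z i"
  have "map x [0..<m] = map z [0..<m]" by (rule map_cong) (auto simp: h)
  then show ?thesis unfolding morph_prefix_def by (simp only:)
qed

lemma fp_unique:
  assumes fx: "is_fixed_point \<sigma> x" and fz: "is_fixed_point \<sigma> z" and e0: "x 0 = z 0"
    and ne: "\<forall>c. \<sigma> c \<noteq> []" and l2: "2 \<le> length (\<sigma> (x 0))"
  shows "x n = z n"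
proof (induction n rule: less_induct)
  case (less n)
  show ?case
  proof (cases n)
    case 0 then show ?thesis using e0 by simp
  next
    case (Suc k)
    have eq: "morph_prefix \<sigma> x n = morph_prefix \<sigma> z n"
      by (rule mp_cong) (use less in auto)
    have "k + length (\<sigma> (x 0)) \<le> length (morph_prefix \<sigma> x n)"
      using mp_len[OF ne, of k x] Suc by simp
    then have lt: "n < length (morph_prefix \<sigma> x n)" using l2 Suc by simp
    have "x n = morph_prefix \<sigma> x n ! n" using fx lt unfolding is_fixed_point_def by metis
    also have "\<dots> = morph_prefix \<sigma> z n ! n" using eq by simp
    also have "\<dots> = z n" using fz lt eq unfolding is_fixed_point_def by metis
    finally show ?thesis .
  qed
qed

lemma fp_of_prefix:
  assumes "\<forall>m. \<exists>L. morph_prefix \<sigma> x m = map x [0..<L]"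
    and "\<forall>n. \<exists>m. n \<le> length (morph_prefix \<sigma> x m)"
  shows "is_fixed_point \<sigma> x"
  unfolding is_fixed_point_def
proof (intro conjI allI impI)
  fix n show "\<exists>m. n \<le> length (morph_prefix \<sigma> x m)" using assms(2) by blast
next
  fix m i assume i: "i < length (morph_prefix \<sigma> x m)"
  obtain L where L: "morph_prefix \<sigma> x m = map x [0..<L]" using assms(1) by blast
  show "morph_prefix \<sigma> x m ! i = x i" using i L by simp
qed

lemma uniform2_fp:
  assumes h: "\<forall>n. \<tau> (y n) = [y (2*n), y (Suc (2*n))]"
  shows "is_fixed_point \<tau> y"
proof -
  have p: "morph_prefix \<tau> y m = map y [0..<2*m]" for m
  proof (induction m)
    case 0 then show ?case by simp
  next
    case (Suc m)
    have "morph_prefix \<tau> y (Suc m) = map y [0..<2*m] @ [y (2*m), y (Suc (2*m))]"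
      using Suc h by (simp add: mp_Suc)
    also have "\<dots> = map y [0..<2 * Suc m]" by simp
    finally show ?case .
  qed
  show ?thesis
  proof (rule fp_of_prefix)
    show "\<forall>m. \<exists>L. morph_prefix \<tau> y m = map y [0..<L]" using p by blast
    show "\<forall>n. \<exists>m. n \<le> length (morph_prefix \<tau> y m)" proof
      fix n show "\<exists>m. n \<le> length (morph_prefix \<tau> y m)" by (rule exI[of _ n]) (simp add: p)
    qed
  qed
qed

function gX :: "('a \<Rightarrow> 'a) \<Rightarrow> 'a \<Rightarrow> nat \<Rightarrow> 'a" where
  "gX g a n = (if even n then a else g (gX g a (n div 2)))"
  by auto
termination
  by (relation "measure (\<lambda>(g, a, n). n)") (auto elim: oddE)

declare gX.simps[simp del]

lemma gX_even[simp]: "gX g a (2*n) = a"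
  by (subst gX.simps) simp

lemma gX_odd[simp]: "gX g a (Suc (2*n)) = g (gX g a n)"
  by (subst gX.simps) simp

lemma map3: "map f [0..<n] @ [f n, f (n+1), f (n+2)] = map f [0..<Suc (Suc (Suc n))]"
  by (simp add: numeral_eq_Suc)

lemma gX_prefix:
  assumes sa: "\<sigma> a = [a, g a, a]" and sg: "\<forall>y. \<sigma> (g y) = [g (g y)]"
  shows "morph_prefix \<sigma> (gX g a) (2*k) = map (gX g a) [0..<4*k] \<and>
         morph_prefix \<sigma> (gX g a) (Suc (2*k)) = map (gX g a) [0..<Suc (Suc (Suc (4*k)))]"
proof (induction k)
  case 0
  have "gX g a 0 = a" using gX_even[of g a 0] by simp
  moreover have "gX g a 1 = g a" using gX_odd[of g a 0] gX_even[of g a 0] by simp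
  moreover have "gX g a 2 = a" using gX_even[of g a 1] by simp
  ultimately show ?case using sa by (simp add: mp_Suc numeral_eq_Suc upt_rec)
next
  case (Suc k)
  let ?X = "gX g a"
  have a1: "?X (Suc (2*k)) = g (?X k)" by simp
  have a2: "?X (Suc (Suc (Suc (4*k)))) = g (g (?X k))"
    using gX_odd[of g a "Suc (2*k)"] gX_odd[of g a k] by (simp add: algebra_simps)
  have a3: "?X (4*Suc k) = a"
  proof -
    have "4*Suc k = 2*(2*Suc k)" by simp
    then show ?thesis by (simp only: gX_even)
  qed
  have a4: "?X (4*Suc k+1) = g a"
  proof -
    have "4*Suc k+1 = Suc (2*(2*(Suc k)))" by simp
    then show ?thesis by (simp only: gX_odd gX_even)
  qed
  have a5: "?X (4*Suc k+2) = a"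
  proof -
    have "4*Suc k+2 = 2*(2*k+3)" by simp
    then show ?thesis by (simp only: gX_even)
  qed
  have e1: "morph_prefix \<sigma> ?X (2 * Suc k) = map ?X [0..<4 * Suc k]"
  proof -
    have "morph_prefix \<sigma> ?X (2 * Suc k) = morph_prefix \<sigma> ?X (Suc (2*k)) @ \<sigma> (?X (Suc (2*k)))"
      by (simp add: mp_Suc)
    also have "\<dots> = map ?X [0..<Suc (Suc (Suc (4*k)))] @ [?X (Suc (Suc (Suc (4*k))))]"
      using Suc a1 a2 sg by simp
    also have "\<dots> = map ?X [0..<4 * Suc k]" by (simp add: numeral_eq_Suc)
    finally show ?thesis .
  qed
  have e2: "morph_prefix \<sigma> ?X (Suc (2 * Suc k)) = map ?X [0..<Suc (Suc (Suc (4 * Suc k)))]"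
  proof -
    have "morph_prefix \<sigma> ?X (Suc (2 * Suc k)) = map ?X [0..<4 * Suc k] @ \<sigma> (?X (2 * Suc k))"
      using e1 by (simp only: mp_Suc)
    also have "\<sigma> (?X (2 * Suc k)) = [?X (4*Suc k), ?X (4*Suc k+1), ?X (4*Suc k+2)]"
      by (simp only: gX_even sa a3 a4 a5)
    also have "map ?X [0..<4 * Suc k] @ [?X (4*Suc k), ?X (4*Suc k+1), ?X (4*Suc k+2)] = map ?X [0..<Suc (Suc (Suc (4 * Suc k)))]"
      by (rule map3)
    finally show ?thesis .
  qed
  show ?case using e1 e2 by simp
qed

lemma gX_fp:
  assumes sa: "\<sigma> a = [a, g a, a]" and sg: "\<forall>y. \<sigma> (g y) = [g (g y)]"
  shows "is_fixed_point \<sigma> (gX g a)"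
proof (rule fp_of_prefix)
  show "\<forall>m. \<exists>L. morph_prefix \<sigma> (gX g a) m = map (gX g a) [0..<L]"
  proof
    fix m
    obtain k where "m = 2*k \<or> m = Suc (2*k)" by (metis oddE evenE Suc_eq_plus1)
    then show "\<exists>L. morph_prefix \<sigma> (gX g a) m = map (gX g a) [0..<L]"
      using gX_prefix[OF sa sg, of k] by blast
  qed
  show "\<forall>n. \<exists>m. n \<le> length (morph_prefix \<sigma> (gX g a) m)"
  proof
    fix n show "\<exists>m. n \<le> length (morph_prefix \<sigma> (gX g a) m)"
      using gX_prefix[OF sa sg, of n] by (intro exI[of _ "2*n"]) simp
  qed
qed

fun g4 :: "letter4 \<Rightarrow> letter4" where
  "g4 La = Lb" | "g4 Lb = Ld" | "g4 Ld = Lc" | "g4 Lc = Lb"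

fun g3 :: "letter3 \<Rightarrow> letter3" where
  "g3 Ma = Mb" | "g3 Mb = Mc" | "g3 Mc = Mb"

fun code4 :: "letter4 \<Rightarrow> nat" where
  "code4 La = 0" | "code4 Lb = 1" | "code4 Lc = 2" | "code4 Ld = 3"

definition dec4 :: "nat \<Rightarrow> letter4" where
  "dec4 n = (if n = 0 then La else if n = 1 then Lb else if n = 2 then Lc else Ld)"

fun code3 :: "letter3 \<Rightarrow> nat" where
  "code3 Ma = 0" | "code3 Mb = 1" | "code3 Mc = 2"

definition dec3 :: "nat \<Rightarrow> letter3" where
  "dec3 n = (if n = 0 then Ma else if n = 1 then Mb else Mc)"

lemma dec4_code4[simp]: "dec4 (code4 l) = l" by (cases l) (auto simp: dec4_def)
lemma dec3_code3[simp]: "dec3 (code3 l) = l" by (cases l) (auto simp: dec3_def)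
lemma code4_in: "code4 l \<in> {0,1,2,3}" by (cases l) auto
lemma code3_in: "code3 l \<in> {0,1,2}" by (cases l) auto

lemma s4a: "sigma4 La = [La, g4 La, La]" by simp
lemma s4g: "\<forall>y. sigma4 (g4 y) = [g4 (g4 y)]" by (intro allI, case_tac y) auto
lemma s3a: "sigma3 Ma = [Ma, g3 Ma, Ma]" by simp
lemma s3g: "\<forall>y. sigma3 (g3 y) = [g3 (g3 y)]" by (intro allI, case_tac y) auto

lemma qa4: "q_automatic 2 (gX g4 La)"
  unfolding q_automatic_def
proof (intro conjI exI)
  let ?\<tau> = "\<lambda>c::nat. [0::nat, code4 (g4 (dec4 c))]"
  show "finite {0::nat,1,2,3}" by simp
  show "\<forall>c\<in>{0::nat,1,2,3}. length (?\<tau> c) = 2 \<and> set (?\<tau> c) \<subseteq> {0,1,2,3}"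
    using code4_in by auto
  show "\<forall>n. code4 (gX g4 La n) \<in> {0,1,2,3}" using code4_in by auto
  show "is_fixed_point ?\<tau> (\<lambda>n. code4 (gX g4 La n))"
    by (rule uniform2_fp) simp
  show "\<forall>n. gX g4 La n = dec4 (code4 (gX g4 La n))" by simp
qed simp

lemma qa3: "q_automatic 2 (gX g3 Ma)"
  unfolding q_automatic_def
proof (intro conjI exI)
  let ?\<tau> = "\<lambda>c::nat. [0::nat, code3 (g3 (dec3 c))]"
  show "finite {0::nat,1,2}" by simp
  show "\<forall>c\<in>{0::nat,1,2}. length (?\<tau> c) = 2 \<and> set (?\<tau> c) \<subseteq> {0,1,2}"
    using code3_in by auto
  show "\<forall>n. code3 (gX g3 Ma n) \<in> {0,1,2}" using code3_in by auto
  show "is_fixed_point ?\<tau> (\<lambda>n. code3 (gX g3 Ma n))"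
    by (rule uniform2_fp) simp
  show "\<forall>n. gX g3 Ma n = dec3 (code3 (gX g3 Ma n))" by simp
qed simp

lemma g3_ne: "g3 y \<noteq> Ma" by (cases y) auto

theorem mainTheorem10:
  shows "((\<exists>x. is_fixed_point sigma4 x \<and> x 0 = La) \<and>
          (\<forall>x. is_fixed_point sigma4 x \<and> x 0 = La \<longrightarrow> q_automatic 2 x))
       \<and> ((\<exists>x. is_fixed_point sigma3 x \<and> x 0 = Ma) \<and>
          (\<forall>x. is_fixed_point sigma3 x \<and> x 0 = Ma \<longrightarrow>
              q_automatic 2 x \<and>
              (\<forall>n. (x (2*n), x (2*n+1)) \<in> {(Ma, Mb), (Ma, Mc)}) \<and>
              is_fixed_point tau01 (\<lambda>n. if (x (2*n), x (2*n+1)) = (Ma, Mb) then 0 else 1)))"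
proof -
  have F4: "is_fixed_point sigma4 (gX g4 La)" by (rule gX_fp[OF s4a s4g])
  have F3: "is_fixed_point sigma3 (gX g3 Ma)" by (rule gX_fp[OF s3a s3g])
  have z4: "gX g4 La 0 = La" using gX_even[of g4 La 0] by simp
  have z3: "gX g3 Ma 0 = Ma" using gX_even[of g3 Ma 0] by simp
  have ne4: "\<forall>c. sigma4 c \<noteq> []" by (intro allI, case_tac c) auto
  have ne3: "\<forall>c. sigma3 c \<noteq> []" by (intro allI, case_tac c) auto
  have U4: "x = gX g4 La" if "is_fixed_point sigma4 x" "x 0 = La" for x
    using fp_unique[OF that(1) F4 _ ne4] that z4 by auto
  have U3: "x = gX g3 Ma" if "is_fixed_point sigma3 x" "x 0 = Ma" for x
    using fp_unique[OF that(1) F3 _ ne3] that z3 by auto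
  let ?X = "gX g3 Ma"
  have pairs: "\<forall>n. (?X (2*n), ?X (2*n+1)) \<in> {(Ma, Mb), (Ma, Mc)}"
  proof
    fix n show "(?X (2*n), ?X (2*n+1)) \<in> {(Ma, Mb), (Ma, Mc)}"
      by (cases "g3 (?X n)") (auto simp: g3_ne)
  qed
  have T: "is_fixed_point tau01 (\<lambda>n. if (?X (2*n), ?X (2*n+1)) = (Ma, Mb) then 0 else 1::nat)"
  proof (rule uniform2_fp, intro allI)
    fix n
    have e: "?X (Suc (2 * Suc (2*n))) = g3 (g3 (?X n))"
      using gX_odd[of g3 Ma "Suc (2*n)"] by simp
    have e2: "?X (Suc (2 * (2*n))) = g3 Ma" using gX_odd[of g3 Ma "2*n"] by simp
    have e3: "2 * Suc (2*n) = 2 * (2*n+1)" by simp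
    show "tau01 (if (?X (2*n), ?X (2*n+1)) = (Ma, Mb) then 0 else 1) =
      [if (?X (2*(2*n)), ?X (2*(2*n)+1)) = (Ma, Mb) then 0 else 1,
       if (?X (2*Suc (2*n)), ?X (2*Suc (2*n)+1)) = (Ma, Mb) then 0 else 1]"
      using e e2 gX_even[of g3 Ma "Suc (2*n)"] gX_even[of g3 Ma "2*n"]
      by (cases "?X n") (auto simp: tau01_def)
  qed
  have P1: "(\<exists>x. is_fixed_point sigma4 x \<and> x 0 = La)" using F4 z4 by blast
  have P2: "\<forall>x. is_fixed_point sigma4 x \<and> x 0 = La \<longrightarrow> q_automatic 2 x"
    using U4 qa4 by blast
  have P3: "(\<exists>x. is_fixed_point sigma3 x \<and> x 0 = Ma)" using F3 z3 by blast
  have P4: "\<forall>x. is_fixed_point sigma3 x \<and> x 0 = Ma \<longrightarrow>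
              q_automatic 2 x \<and>
              (\<forall>n. (x (2*n), x (2*n+1)) \<in> {(Ma, Mb), (Ma, Mc)}) \<and>
              is_fixed_point tau01 (\<lambda>n. if (x (2*n), x (2*n+1)) = (Ma, Mb) then 0 else 1)"
  proof (intro allI impI)
    fix x assume "is_fixed_point sigma3 x \<and> x 0 = Ma"
    then have "x = ?X" using U3 by blast
    then show "q_automatic 2 x \<and>
              (\<forall>n. (x (2*n), x (2*n+1)) \<in> {(Ma, Mb), (Ma, Mc)}) \<and>
              is_fixed_point tau01 (\<lambda>n. if (x (2*n), x (2*n+1)) = (Ma, Mb) then 0 else 1)"
      using qa3 pairs T by simp
  qed
  show ?thesis using P1 P2 P3 P4 by blast
qed

end
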